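(* Let $\boldsymbol{\Gamma}$ be a definable (boldface) pointclass that is downward closed with respect to Wadge reducibility. Assume that every $P\in\boldsymbol{\Gamma}([\mathbb{N}]^\mathbb{N})$ is Ramsey (i.e. $\mathrm{HS}(P)\neq\emptyset$) and that for every $h\in[\mathbb{N}]^\mathbb{N}$, $\boldsymbol{\Gamma}([h]^\mathbb{N})=\{P\cap[h]^\mathbb{N}: P\in\boldsymbol{\Gamma}([\mathbb{N}]^\mathbb{N})\}$. If $\mathsf{R}:\subseteq\boldsymbol{\Gamma}([\mathbb{N}]^\mathbb{N})\rightrightarrows[\mathbb{N}]^\mathbb{N}$ is a multivalued function such that $\mathsf{R}(x)=\mathrm{HS}(x)$ for every $x\in\operatorname{dom}(\mathsf{R})$, then $\mathrm{id}_2\not\le_{\mathrm{sW}}\mathsf{R}$. In particular $\mathrm{id}_2$ (and a fortiori $\mathsf{UC}_{\mathbb{N}^\mathbb{N}}$) is not strongly Weihrauch reducible to any of $\mathsf{wFindHS}_{\boldsymbol{\Sigma}^0_1}$, $\mathsf{wFindHS}_{\boldsymbol{\Pi}^0_1}$, $\mathsf{wFindHS}_{\boldsymbol{\Delta}^0_1}$, $\boldsymbol{\Sigma}^0_1\text{-}\mathsf{RT}$, $\boldsymbol{\Delta}^0_1\text{-}\mathsf{RT}$.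
   Context: Strong Weihrauch reducibility: $f\le_{\mathrm{sW}} g$ iff there are computable $\Phi,\Psi$ on Baire space with $\Psi\circ G\circ\Phi$ realizing $f$ for every realizer $G$ of $g$. $\mathrm{id}_2$ is the identity on $\{0,1\}$. The Ramsey space $[\mathbb{N}]^\mathbb{N}$ is the set of strictly increasing functions $\mathbb{N}\to\mathbb{N}$ with Baire-space topology (identified with infinite subsets of $\mathbb{N}$ via ranges); $fg=f\circ g$; $[h]^\mathbb{N}$ is the set of subsequences $hg$, $g\in[\mathbb{N}]^\mathbb{N}$. For $P\subseteq[\mathbb{N}]^\mathbb{N}$, $f$ is homogeneous for $P$ if either $fg\in P$ for all $g\in[\mathbb{N}]^\mathbb{N}$ ($f$ lands in $P$) or $fg\notin P$ for all $g$ ($f$ avoids $P$); $\mathrm{HS}(P)$ is the set of these; for a set $Q\subseteq[h]^\mathbb{N}$, homogeneity is defined analogously within $[h]^\mathbb{N}$. $\boldsymbol{\Gamma}([\mathbb{N}]^\mathbb{N})$ is regarded as a represented space. Open sets of $[\mathbb{N}]^\mathbb{N}$ are named by enumerations of sets of finite strictly increasing strings whose cones have union the set; clopen sets by pairs of names of the set and its complement. $\boldsymbol{\Sigma}^0_1\text{-}\mathsf{RT}(P)=\mathrm{HS}(P)$ for open $P$; $\boldsymbol{\Delta}^0_1\text{-}\mathsf{RT}(D)=\mathrm{HS}(D)$ for clopen $D$; $\mathsf{wFindHS}_{\boldsymbol{\Sigma}^0_1}$ is $P\mapsto\mathrm{HS}(P)\cap P$ on open $P$ with $\mathrm{HS}(P)\subseteq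 P$; $\mathsf{wFindHS}_{\boldsymbol{\Delta}^0_1}$ is the same on clopen inputs; $\mathsf{wFindHS}_{\boldsymbol{\Pi}^0_1}$ is $P\mapsto\mathrm{HS}(P)\setminus P$ on open $P$ with $\mathrm{HS}(P)\cap P=\emptyset$. $\mathsf{UC}_{\mathbb{N}^\mathbb{N}}$: given a name of a closed singleton subset of $\mathbb{N}^\mathbb{N}$, output its element. *)

theory Defs
  imports "HOL-Analysis.Analysis" "HOL-Library.Nat_Bijection"
begin

type_synonym baire = "nat \<Rightarrow> nat"

inductive total_rec :: "nat \<Rightarrow> (nat list \<Rightarrow> nat) \<Rightarrow> bool" where
  zero: "total_rec n (\<lambda>xs. 0)"
| succ: "total_rec 1 (\<lambda>xs. Suc (xs ! 0))"
| proj: "i < n \<Longrightarrow> total_rec n (\<lambda>xs. xs ! i)"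
| comp: "total_rec m f \<Longrightarrow> length gs = m \<Longrightarrow> (\<forall>g\<in>set gs. total_rec n g)
          \<Longrightarrow> total_rec n (\<lambda>xs. f (map (\<lambda>g. g xs) gs))"
| prim: "total_rec n f \<Longrightarrow> total_rec (n + 2) g
          \<Longrightarrow> total_rec (n + 1)
                (\<lambda>xs. rec_nat (f (tl xs)) (\<lambda>k r. g (r # k # tl xs)) (hd xs))"
| mini: "total_rec (n + 1) f \<Longrightarrow> (\<forall>xs. length xs = n \<longrightarrow> (\<exists>y. f (y # xs) = 0))
          \<Longrightarrow> total_rec n (\<lambda>xs. LEAST y. f (y # xs) = 0)"

definition computable_nat :: "(nat \<Rightarrow> nat) \<Rightarrow> bool" where
  "computable_nat h \<longleftrightarrow> (\<exists>g. total_rec 1 g \<and> (\<forall>x. h x = g [x]))"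

definition prefix_of :: "nat list \<Rightarrow> baire \<Rightarrow> bool" where
  "prefix_of w q \<longleftrightarrow> (\<forall>i<length w. w ! i = q i)"

definition init_seg :: "baire \<Rightarrow> nat \<Rightarrow> nat list" where
  "init_seg p m = map p [0..<m]"

text \<open>F is (the restriction to D of) a computable partial function on Baire space:
  a computable word function h (on codes of finite strings) whose outputs on the initial
  segments of any p in D are prefixes of F p of unbounded length.\<close>
definition computable_on :: "baire set \<Rightarrow> (baire \<Rightarrow> baire) \<Rightarrow> bool" where
  "computable_on D F \<longleftrightarrow> (\<exists>h. computable_nat h \<and>
     (\<forall>p\<in>D. (\<forall>m. prefix_of (list_decode (h (list_encode (init_seg p m)))) (F p)) \<and>
              (\<forall>n. \<exists>m. n \<le> length (list_decode (h (list_encode (init_seg p m)))))))"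

text \<open>A represented space is a pair (set of names, representation map); it represents
  the image of the set of names. A multivalued function f :\<subseteq> X \<rightrightarrows> Y is given
  by its domain A and its value map f.\<close>
type_synonym 'a rep_space = "baire set \<times> (baire \<Rightarrow> 'a)"

definition realizes ::
  "'a rep_space \<Rightarrow> 'b rep_space \<Rightarrow> 'a set \<Rightarrow> ('a \<Rightarrow> 'b set) \<Rightarrow> (baire \<Rightarrow> baire) \<Rightarrow> bool" where
  "realizes X Y A f G \<longleftrightarrow>
     (\<forall>p\<in>fst X. snd X p \<in> A \<longrightarrow> G p \<in> fst Y \<and> snd Y (G p) \<in> f (snd X p))"

definition sW_reducible ::
  "'a rep_space \<Rightarrow> 'b rep_space \<Rightarrow> 'a set \<Rightarrow> ('a \<Rightarrow> 'b set) \<Rightarrow>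
   'c rep_space \<Rightarrow> 'd rep_space \<Rightarrow> 'c set \<Rightarrow> ('c \<Rightarrow> 'd set) \<Rightarrow> bool" where
  "sW_reducible X Y A f X' Y' B g \<longleftrightarrow>
     (\<exists>\<Phi> \<Psi>.
        computable_on {p \<in> fst X. snd X p \<in> A} \<Phi> \<and>
        (\<forall>p\<in>fst X. snd X p \<in> A \<longrightarrow> \<Phi> p \<in> fst X' \<and> snd X' (\<Phi> p) \<in> B) \<and>
        computable_on {q \<in> fst Y'. \<exists>p\<in>fst X. snd X p \<in> A \<and> snd Y' q \<in> g (snd X' (\<Phi> p))} \<Psi> \<and>
        (\<forall>G. realizes X' Y' B g G \<longrightarrow> realizes X Y A f (\<Psi> \<circ> G \<circ> \<Phi>)))"

definition two_space :: "nat rep_space" where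
  "two_space = ({p. p 0 \<in> {0, 1}}, \<lambda>p. p 0)"

definition id2_dom :: "nat set" where "id2_dom = {0, 1}"
definition id2 :: "nat \<Rightarrow> nat set" where "id2 x = {x}"

definition ramsey_space :: "baire set" where
  "ramsey_space = {f. strict_mono f}"

definition ramsey_rep :: "baire rep_space" where
  "ramsey_rep = (ramsey_space, id)"

definition HS :: "baire set \<Rightarrow> baire set" where
  "HS P = {f \<in> ramsey_space. (\<forall>g\<in>ramsey_space. f \<circ> g \<in> P) \<or> (\<forall>g\<in>ramsey_space. f \<circ> g \<notin> P)}"

definition wadge_closed :: "baire set set \<Rightarrow> bool" where
  "wadge_closed \<Gamma> \<longleftrightarrow> (\<forall>A B \<phi>. A \<subseteq> ramsey_space \<longrightarrow> B \<in> \<Gamma> \<longrightarrow>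
      continuous_on ramsey_space \<phi> \<longrightarrow> \<phi> ` ramsey_space \<subseteq> ramsey_space \<longrightarrow>
      A = {x \<in> ramsey_space. \<phi> x \<in> B} \<longrightarrow> A \<in> \<Gamma>)"

end

theory Submission
  imports Defs
begin

lemma cont_comp_left: "continuous_on S (\<lambda>g::baire. (f::nat\<Rightarrow>nat) \<circ> g)"
proof -
  have "\<And>i. continuous_on S (\<lambda>g::baire. f (g i))"
  proof -
    fix i
    have c1: "continuous_on S (\<lambda>g::baire. g i)"
      by (rule continuous_on_subset[OF continuous_on_product_coordinates]) simp
    have c2: "continuous_on UNIV (f::nat\<Rightarrow>nat)" by simp
    show "continuous_on S (\<lambda>g::baire. f (g i))"
      using continuous_on_compose2[OF c2 c1] by simp
  qed
  then show ?thesis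
    by (intro continuous_on_coordinatewise_then_product) (simp add: o_def)
qed

lemma rs_comp: "f \<in> ramsey_space \<Longrightarrow> g \<in> ramsey_space \<Longrightarrow> f \<circ> g \<in> ramsey_space"
  by (auto simp: ramsey_space_def strict_mono_def)

lemma HS_common:
  assumes sub: "\<forall>P\<in>\<Gamma>. P \<subseteq> ramsey_space"
    and w: "wadge_closed \<Gamma>"
    and r: "\<forall>P\<in>\<Gamma>. HS P \<noteq> {}"
    and P0: "P0 \<in> \<Gamma>" and P1: "P1 \<in> \<Gamma>"
  shows "\<exists>q. q \<in> HS P0 \<and> q \<in> HS P1"
proof -
  obtain f where f: "f \<in> HS P0" using r P0 by blast
  have fr: "f \<in> ramsey_space" using f by (simp add: HS_def)
  define A where "A = {g \<in> ramsey_space. f \<circ> g \<in> P1}"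
  have wc: "\<And>A B \<phi>. A \<subseteq> ramsey_space \<Longrightarrow> B \<in> \<Gamma> \<Longrightarrow>
      continuous_on ramsey_space \<phi> \<Longrightarrow> \<phi> ` ramsey_space \<subseteq> ramsey_space \<Longrightarrow>
      A = {x \<in> ramsey_space. \<phi> x \<in> B} \<Longrightarrow> A \<in> \<Gamma>"
    using w unfolding wadge_closed_def by blast
  have im: "(\<lambda>g. f \<circ> g) ` ramsey_space \<subseteq> ramsey_space" using rs_comp[OF fr] by blast
  have "A \<in> \<Gamma>"
    by (rule wc[OF _ P1 cont_comp_left im]) (auto simp: A_def)
  then obtain g where g: "g \<in> HS A" using r by blast
  have gr: "g \<in> ramsey_space" using g by (simp add: HS_def)
  have "f \<circ> g \<in> HS P0"
    using f gr rs_comp[OF fr gr] unfolding HS_def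
    by (auto simp: o_assoc[symmetric] intro: rs_comp)
  moreover have "f \<circ> g \<in> HS P1"
  proof -
    have "(\<forall>h\<in>ramsey_space. g \<circ> h \<in> A) \<or> (\<forall>h\<in>ramsey_space. g \<circ> h \<notin> A)"
      using g by (simp add: HS_def)
    then show ?thesis
      using rs_comp[OF fr gr] gr unfolding HS_def A_def
      by (auto simp: o_assoc intro: rs_comp)
  qed
  ultimately show ?thesis by blast
qed

theorem mainTheorem14:
  fixes \<Gamma> :: "baire set set"
    and N\<Gamma> :: "baire set" and \<delta>\<Gamma> :: "baire \<Rightarrow> baire set"
    and domR :: "baire set set"
  assumes "\<forall>P\<in>\<Gamma>. P \<subseteq> ramsey_space"
    and "wadge_closed \<Gamma>"
    and "\<forall>P\<in>\<Gamma>. HS P \<noteq> {}"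
    and "\<delta>\<Gamma> ` N\<Gamma> = \<Gamma>"
    and "domR \<subseteq> \<Gamma>"
  shows "\<not> sW_reducible two_space two_space id2_dom id2 (N\<Gamma>, \<delta>\<Gamma>) ramsey_rep domR HS"
proof
  assume "sW_reducible two_space two_space id2_dom id2 (N\<Gamma>, \<delta>\<Gamma>) ramsey_rep domR HS"
  then obtain \<Phi> \<Psi> where
    phi: "\<forall>p\<in>fst two_space. snd two_space p \<in> id2_dom \<longrightarrow> \<Phi> p \<in> N\<Gamma> \<and> \<delta>\<Gamma> (\<Phi> p) \<in> domR"
    and G: "\<forall>G. realizes (N\<Gamma>, \<delta>\<Gamma>) ramsey_rep domR HS G \<longrightarrow>
               realizes two_space two_space id2_dom id2 (\<Psi> \<circ> G \<circ> \<Phi>)"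
    unfolding sW_reducible_def fst_conv snd_conv by blast
  define p0 :: baire where "p0 = (\<lambda>_. 0)"
  define p1 :: baire where "p1 = (\<lambda>n. if n = 0 then 1 else 0)"
  have p0: "p0 \<in> fst two_space" "snd two_space p0 = 0"
    and p1: "p1 \<in> fst two_space" "snd two_space p1 = 1"
    by (auto simp: p0_def p1_def two_space_def)
  have i01: "0 \<in> id2_dom" "1 \<in> id2_dom" by (auto simp: id2_dom_def)
  have a0: "\<Phi> p0 \<in> N\<Gamma>" "\<delta>\<Gamma> (\<Phi> p0) \<in> domR" using phi p0 i01 by auto
  have a1: "\<Phi> p1 \<in> N\<Gamma>" "\<delta>\<Gamma> (\<Phi> p1) \<in> domR" using phi p1 i01 by auto
  obtain q where q: "q \<in> HS (\<delta>\<Gamma> (\<Phi> p0))" "q \<in> HS (\<delta>\<Gamma> (\<Phi> p1))"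
    using HS_common[OF assms(1,2,3)] a0(2) a1(2) assms(5) by blast
  define Gf where "Gf = (\<lambda>x. if x = \<Phi> p0 \<or> x = \<Phi> p1 then q else (SOME r. r \<in> HS (\<delta>\<Gamma> x)))"
  have "realizes (N\<Gamma>, \<delta>\<Gamma>) ramsey_rep domR HS Gf"
    unfolding realizes_def ramsey_rep_def
  proof (intro ballI impI)
    fix x assume "x \<in> fst (N\<Gamma>, \<delta>\<Gamma>)" and xd: "snd (N\<Gamma>, \<delta>\<Gamma>) x \<in> domR"
    have "HS (\<delta>\<Gamma> x) \<noteq> {}" using xd assms(3,5) by auto
    then have "Gf x \<in> HS (\<delta>\<Gamma> x)"
      using q unfolding Gf_def by (auto dest: someI[where P="\<lambda>r. r \<in> HS (\<delta>\<Gamma> x)"])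
    then show "Gf x \<in> fst (ramsey_space, id) \<and> snd (ramsey_space, id) (Gf x) \<in> HS (snd (N\<Gamma>, \<delta>\<Gamma>) x)"
      by (simp add: HS_def)
  qed
  then have R: "realizes two_space two_space id2_dom id2 (\<Psi> \<circ> Gf \<circ> \<Phi>)" using G by blast
  have g0: "Gf (\<Phi> p0) = q" and g1: "Gf (\<Phi> p1) = q" by (simp_all add: Gf_def)
  have "(\<Psi> \<circ> Gf \<circ> \<Phi>) p0 \<in> fst two_space \<and> snd two_space ((\<Psi> \<circ> Gf \<circ> \<Phi>) p0) \<in> id2 (snd two_space p0)"
    using R p0 i01 unfolding realizes_def by metis
  then have "\<Psi> q 0 = 0" using g0 p0(2) by (simp add: two_space_def id2_def)
  moreover
  have "(\<Psi> \<circ> Gf \<circ> \<Phi>) p1 \<in> fst two_space \<and> snd two_space ((\<Psi> \<circ> Gf \<circ> \<Phi>) p1) \<in> id2 (snd two_space p1)"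
    using R p1 i01 unfolding realizes_def by metis
  then have "\<Psi> q 0 = 1" using g1 p1(2) by (simp add: two_space_def id2_def)
  ultimately show False by simp
qed

end
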